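(* Let $F\subset[\alpha,\beta]$ be closed with $\{\alpha,\beta\}\subset F$ and $\lambda(F)=0$. Then there exists an increasing continuously differentiable homeomorphism $h$ of $[\alpha,\beta]$ onto itself such that $h'(x)=0$ if and only if $x\in h^{-1}(F)$, $h$ is twice differentiable on $[\alpha,\beta]\setminus h^{-1}(F)$, and $h^{-1}$ is absolutely continuous.
   Context: $\lambda$ denotes Lebesgue measure on $\mathbb R$. Derivatives at $\alpha,\beta$ are one-sided. *)

theory Defs
  imports "HOL-Analysis.Analysis"
begin

definition abs_continuous_on_interval :: "real \<Rightarrow> real \<Rightarrow> (real \<Rightarrow> real) \<Rightarrow> bool" where
  "abs_continuous_on_interval a b f \<longleftrightarrow>
     (\<forall>\<epsilon>>0. \<exists>\<delta>>0. \<forall>(n::nat) (u::nat \<Rightarrow> real) (v::nat \<Rightarrow> real).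
        (\<forall>i<n. a \<le> u i \<and> u i \<le> v i \<and> v i \<le> b) \<and>
        (\<forall>i<n. \<forall>j<n. i \<noteq> j \<longrightarrow> v i \<le> u j \<or> v j \<le> u i) \<and>
        (\<Sum>i<n. v i - u i) < \<delta>
        \<longrightarrow> (\<Sum>i<n. \<bar>f (v i) - f (u i)\<bar>) < \<epsilon>)"

end

theory Submission
  imports Defs
begin

locale L =
  fixes \<alpha> \<beta> :: real and F :: "real set"
  assumes ab: "\<alpha> < \<beta>" and cF: "closed F" and FS: "F \<subseteq> {\<alpha>..\<beta>}"
    and aF: "\<alpha> \<in> F" and bF: "\<beta> \<in> F" and nF: "negligible F"
begin

definition la :: "real \<Rightarrow> real" where "la t = Sup (F \<inter> {..t})"
definition rb :: "real \<Rightarrow> real" where "rb t = Inf (F \<inter> {t..})"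
definition D :: "real \<Rightarrow> real" where "D t = (t - la t) * (rb t - t) / (\<beta> - \<alpha>)"

lemma la_props:
  assumes "t \<in> {\<alpha>..\<beta>}"
  shows "la t \<in> F" "la t \<le> t" "\<And>f. f \<in> F \<Longrightarrow> f \<le> t \<Longrightarrow> f \<le> la t"
proof -
  have ne: "F \<inter> {..t} \<noteq> {}" using aF assms by auto
  have bd: "bdd_above (F \<inter> {..t})" by (rule bdd_aboveI[of _ t]) auto
  have cl: "closed (F \<inter> {..t})" using cF by (intro closed_Int) auto
  show "la t \<in> F" "la t \<le> t" using closed_contains_Sup[OF ne bd cl] unfolding la_def by auto
  show "\<And>f. f \<in> F \<Longrightarrow> f \<le> t \<Longrightarrow> f \<le> la t" unfolding la_def
    by (rule cSup_upper) (use bd in auto)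
qed

lemma rb_props:
  assumes "t \<in> {\<alpha>..\<beta>}"
  shows "rb t \<in> F" "t \<le> rb t" "\<And>f. f \<in> F \<Longrightarrow> t \<le> f \<Longrightarrow> rb t \<le> f"
proof -
  have ne: "F \<inter> {t..} \<noteq> {}" using bF assms by auto
  have bd: "bdd_below (F \<inter> {t..})" by (rule bdd_belowI[of _ t]) auto
  have cl: "closed (F \<inter> {t..})" using cF by (intro closed_Int) auto
  show "rb t \<in> F" "t \<le> rb t" using closed_contains_Inf[OF ne bd cl] unfolding rb_def by auto
  show "\<And>f. f \<in> F \<Longrightarrow> t \<le> f \<Longrightarrow> rb t \<le> f" unfolding rb_def
    by (rule cInf_lower) (use bd in auto)
qed

lemma F_sub: "f \<in> F \<Longrightarrow> f \<in> {\<alpha>..\<beta>}" using FS by auto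

lemma D_nonneg: "t \<in> {\<alpha>..\<beta>} \<Longrightarrow> 0 \<le> D t"
  using la_props[of t] rb_props[of t] ab unfolding D_def by auto

lemma D_F: "t \<in> F \<Longrightarrow> D t = 0"
proof -
  assume t: "t \<in> F"
  hence tt: "t \<in> {\<alpha>..\<beta>}" using F_sub by auto
  have "t \<le> la t" using la_props(3)[OF tt t] by simp
  hence "la t = t" using la_props(2)[OF tt] by simp
  thus ?thesis unfolding D_def by simp
qed

lemma notF_gap:
  assumes "t \<in> {\<alpha>..\<beta>}" "t \<notin> F"
  shows "la t < t" "t < rb t" "0 < D t" "\<alpha> < t" "t < \<beta>"
proof -
  show 1: "la t < t" using la_props[OF assms(1)] assms(2) by (metis order_le_less)
  show 2: "t < rb t" using rb_props[OF assms(1)] assms(2) by (metis order_le_less)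
  show "0 < D t" using 1 2 ab unfolding D_def by simp
  show "\<alpha> < t" "t < \<beta>" using assms aF bF by (auto simp: order_le_less)
qed

lemma D_le_dist:
  assumes s: "s \<in> {\<alpha>..\<beta>}" and f: "f \<in> F"
  shows "D s \<le> \<bar>s - f\<bar>"
proof -
  have A: "la s \<ge> \<alpha>" "rb s \<le> \<beta>" using la_props(1)[OF s] rb_props(1)[OF s] F_sub by auto
  have B: "la s \<le> s" "s \<le> rb s" using la_props[OF s] rb_props[OF s] by auto
  have e1: "(rb s - s) / (\<beta> - \<alpha>) \<le> 1" "(s - la s) / (\<beta> - \<alpha>) \<le> 1" "0 \<le> (rb s - s) / (\<beta> - \<alpha>)"
     "0 \<le> (s - la s) / (\<beta> - \<alpha>)"
    using A B ab s by (auto simp: divide_simps)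
  show ?thesis
  proof (cases "f \<le> s")
    case True
    hence "f \<le> la s" using la_props(3)[OF s f] by simp
    hence "s - la s \<le> \<bar>s - f\<bar>" by simp
    moreover have "D s = (s - la s) * ((rb s - s) / (\<beta> - \<alpha>))" unfolding D_def by simp
    ultimately show ?thesis using e1 B
      by (metis diff_ge_0_iff_ge mult_right_le_one_le order_trans)
  next
    case False
    hence "rb s \<le> f" using rb_props(3)[OF s f] by simp
    hence "rb s - s \<le> \<bar>s - f\<bar>" by simp
    moreover have "D s = (rb s - s) * ((s - la s) / (\<beta> - \<alpha>))" unfolding D_def by simp
    ultimately show ?thesis using e1 B
      by (metis diff_ge_0_iff_ge mult_right_le_one_le order_trans)
  qed
qed

lemma gap_const:
  assumes t: "t \<in> {\<alpha>..\<beta>}" "t \<notin> F" and s: "s \<in> {la t<..<rb t}"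
  shows "la s = la t" "rb s = rb t" "s \<in> {\<alpha>..\<beta>}" "s \<notin> F"
proof -
  have A: "la t \<ge> \<alpha>" "rb t \<le> \<beta>" using la_props(1)[OF t(1)] rb_props(1)[OF t(1)] F_sub by auto
  show ss: "s \<in> {\<alpha>..\<beta>}" using A s by auto
  have noF: "f \<in> F \<Longrightarrow> f \<le> la t \<or> f \<ge> rb t" for f
    using la_props(3)[OF t(1)] rb_props(3)[OF t(1)] by (metis linorder_le_cases)
  show "s \<notin> F" using noF s by force
  have "F \<inter> {..s} = F \<inter> {..t}" using noF s notF_gap[OF t] by force
  thus "la s = la t" unfolding la_def by simp
  have "F \<inter> {s..} = F \<inter> {t..}" using noF s notF_gap[OF t] by force
  thus "rb s = rb t" unfolding rb_def by simp
qed

definition D' :: "real \<Rightarrow> real" where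
  "D' t = ((rb t - t) - (t - la t)) / (\<beta> - \<alpha>)"

lemma D_deriv:
  assumes t: "t \<in> {\<alpha>..\<beta>}" "t \<notin> F"
  shows "(D has_real_derivative D' t) (at t)"
proof -
  let ?p = "\<lambda>s. (s - la t) * (rb t - s) / (\<beta> - \<alpha>)"
  have "((\<lambda>s. (s - la t) * (rb t - s)) has_real_derivative ((1 - 0) * (rb t - t) + (0 - 1) * (t - la t))) (at t)"
    by (intro DERIV_mult DERIV_diff DERIV_ident DERIV_const)
  hence "(?p has_real_derivative ((1 - 0) * (rb t - t) + (0 - 1) * (t - la t)) / (\<beta> - \<alpha>)) (at t)"
    by (rule DERIV_cdivide)
  moreover have "((1 - 0) * (rb t - t) + (0 - 1) * (t - la t)) / (\<beta> - \<alpha>) = D' t"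
    unfolding D'_def by simp
  ultimately have "(?p has_real_derivative D' t) (at t)" by metis
  thus ?thesis
  proof (rule has_field_derivative_transform_within_open[where S="{la t<..<rb t}"])
    show "t \<in> {la t<..<rb t}" using notF_gap[OF t] by simp
    fix s assume s: "s \<in> {la t<..<rb t}"
    show "?p s = D s" unfolding D_def gap_const(1,2)[OF t s] ..
  qed simp
qed

lemma D_cont: "continuous_on {\<alpha>..\<beta>} D"
  unfolding continuous_on_eq_continuous_within
proof (intro ballI)
  fix t assume t: "t \<in> {\<alpha>..\<beta>}"
  show "continuous (at t within {\<alpha>..\<beta>}) D"
  proof (cases "t \<in> F")
    case False
    have "isCont D t" by (rule DERIV_isCont[OF D_deriv[OF t False]])
    thus ?thesis by (rule continuous_at_imp_continuous_at_within)
  next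
    case True
    show ?thesis unfolding continuous_within_eps_delta
    proof (intro allI impI)
      fix e :: real assume e: "0 < e"
      show "\<exists>d>0. \<forall>x'\<in>{\<alpha>..\<beta>}. dist x' t < d \<longrightarrow> dist (D x') (D t) < e"
      proof (intro exI[of _ e] conjI ballI impI)
        fix x' assume x': "x' \<in> {\<alpha>..\<beta>}" and d: "dist x' t < e"
        show "dist (D x') (D t) < e"
          using D_le_dist[OF x' True] D_nonneg[OF x'] D_F[OF True] d by (simp add: dist_real_def)
      qed (use e in auto)
    qed
  qed
qed

end

definition T :: "real \<Rightarrow> real" where "T x = (max x 0)^2"

lemma T_nonneg: "0 \<le> T x" by (simp add: T_def)
lemma T_zero: "x \<le> 0 \<Longrightarrow> T x = 0" by (simp add: T_def)
lemma T_le1: "x \<le> 1 \<Longrightarrow> T x \<le> 1" by (auto simp: T_def power_le_one max_def)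
lemma T_ge: "x \<ge> 1/2 \<Longrightarrow> T x \<ge> 1/4"
proof -
  assume a: "x \<ge> 1/2"
  hence "(1/2::real)^2 \<le> x^2" by (intro power_mono) auto
  moreover have "max x 0 = x" using a by simp
  ultimately show ?thesis unfolding T_def by (simp add: power_divide)
qed

lemma T_quot: "norm ((T y - T 0) / (y - 0)) \<le> \<bar>y\<bar>"
proof (cases "y > 0")
  case True
  hence "T y = y * y" by (simp add: T_def power2_eq_square)
  thus ?thesis using True T_zero[of 0] by simp
next
  case False
  thus ?thesis using T_zero[of y] T_zero[of 0] by simp
qed

lemma T_deriv: "(T has_real_derivative 2 * max x 0) (at x)"
proof -
  consider "x > 0" | "x < 0" | "x = 0" by linarith
  thus ?thesis
  proof cases
    case 1
    have "((\<lambda>y. y^2) has_real_derivative 2 * max x 0) (at x)" using 1 by (auto intro!: derivative_eq_intros)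
    thus ?thesis
      by (rule has_field_derivative_transform_within_open[where S="{0<..}"]) (use 1 in \<open>auto simp: T_def\<close>)
  next
    case 2
    have "((\<lambda>y. 0) has_real_derivative 2 * max x 0) (at x)" using 2 by simp
    thus ?thesis
      by (rule has_field_derivative_transform_within_open[where S="{..<0}"]) (use 2 in \<open>auto simp: T_def\<close>)
  next
    case 3
    have "((\<lambda>y. (T y - T 0) / (y - 0)) \<longlongrightarrow> 0) (at 0)"
    proof (rule Lim_null_comparison)
      show "\<forall>\<^sub>F y in at 0. norm ((T y - T 0) / (y - 0)) \<le> \<bar>y\<bar>"
        by (rule always_eventually, rule allI, rule T_quot)
      have "((\<lambda>y::real. \<bar>y\<bar>) \<longlongrightarrow> \<bar>0\<bar>) (at 0)" by (intro tendsto_intros)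
      thus "((\<lambda>y::real. \<bar>y\<bar>) \<longlongrightarrow> 0) (at 0)" by simp
    qed
    thus ?thesis using 3 by (simp add: has_field_derivative_iff)
  qed
qed

context L begin

definition A :: "real \<Rightarrow> real set" where "A r = {t \<in> {\<alpha>..\<beta>}. D t \<le> r}"

lemma A_lmeas: "A r \<in> lmeasurable"
proof -
  have "closed (D -` {..r} \<inter> {\<alpha>..\<beta>})"
    using iffD1[OF continuous_on_closed_vimage[OF closed_atLeastAtMost] D_cont] closed_atMost by blast
  moreover have "A r = D -` {..r} \<inter> {\<alpha>..\<beta>}" unfolding A_def by auto
  moreover have "bounded (A r)" unfolding A_def by (rule bounded_subset[OF bounded_closed_interval]) auto
  ultimately have "compact (A r)" unfolding compact_eq_bounded_closed by simp
  thus ?thesis by (rule lmeasurable_compact)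
qed

lemma A_mono: "r \<le> r' \<Longrightarrow> A r \<subseteq> A r'" unfolding A_def by auto

lemma exists_r: "\<exists>r>0. r \<le> 1 / Suc n \<and> measure lebesgue (A r) < (1/2)^n"
proof -
  let ?B = "\<lambda>m::nat. A (1 / Suc m)"
  have dec: "decseq ?B"
    by (intro decseq_SucI A_mono) (simp add: frac_le)
  have rng: "range ?B \<subseteq> sets lebesgue" using A_lmeas by (auto intro: fmeasurableD)
  have fin: "emeasure lebesgue (?B m) \<noteq> \<infinity>" for m
    using fmeasurableD2[OF A_lmeas[of "1 / Suc m"]] by simp
  have inter: "(\<Inter>m. ?B m) = F"
  proof
    show "F \<subseteq> (\<Inter>m. ?B m)" using D_F F_sub unfolding A_def by auto
    show "(\<Inter>m. ?B m) \<subseteq> F"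
    proof
      fix t assume t: "t \<in> (\<Inter>m. ?B m)"
      hence tt: "t \<in> {\<alpha>..\<beta>}" unfolding A_def by auto
      show "t \<in> F"
      proof (rule ccontr)
        assume "t \<notin> F"
        hence "0 < D t" using notF_gap[OF tt] by auto
        then obtain m where "inverse (real (Suc m)) < D t" using reals_Archimedean by blast
        moreover have "D t \<le> 1 / Suc m" using t unfolding A_def by auto
        ultimately show False by (simp add: inverse_eq_divide)
      qed
    qed
  qed
  have "measure lebesgue F = 0" using nF by (simp add: negligible_iff_null_sets measure_eq_0_null_sets)
  hence lim: "(\<lambda>m. measure lebesgue (?B m)) \<longlonglongrightarrow> 0"
    using Lim_measure_decseq[OF rng dec fin] inter by simp
  have "\<forall>\<^sub>F m in sequentially. measure lebesgue (?B m) < (1/2)^n"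
    using order_tendstoD(2)[OF lim, of "(1/2)^n"] by simp
  moreover have "\<forall>\<^sub>F m in sequentially. n \<le> m" by (rule eventually_ge_at_top)
  ultimately have "\<forall>\<^sub>F m in sequentially. measure lebesgue (?B m) < (1/2)^n \<and> n \<le> m"
    by (rule eventually_conj)
  then obtain N where N: "\<And>m. m \<ge> N \<Longrightarrow> measure lebesgue (?B m) < (1/2)^n \<and> n \<le> m"
    unfolding eventually_sequentially by blast
  obtain m where m: "measure lebesgue (?B m) < (1/2)^n" "n \<le> m" using N[of N] by blast
  show ?thesis
    by (rule exI[of _ "1 / Suc m"]) (use m in \<open>auto simp: frac_le\<close>)
qed

definition r :: "nat \<Rightarrow> real" where
  "r n = (SOME x. x > 0 \<and> x \<le> 1 / Suc n \<and> measure lebesgue (A x) < (1/2)^n)"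

lemma r_props: "r n > 0" "r n \<le> 1 / Suc n" "measure lebesgue (A (r n)) < (1/2)^n"
  using someI_ex[OF exists_r[of n]] unfolding r_def by auto

end

lemma geo_sum: "(\<Sum>n<k. (1/2::real)^n) = 2 - 2 * (1/2)^k"
  by (induction k) auto

context L begin

definition \<theta> :: "nat \<Rightarrow> real \<Rightarrow> real" where "\<theta> n s = T (1 - s / r n)"
definition Wf :: "real \<Rightarrow> real" where "Wf s = (\<Sum>k<nat \<lceil>1/s\<rceil>. \<theta> k s)"
definition w :: "real \<Rightarrow> real" where "w t = 1 + Wf (D t)"
definition fk :: "nat \<Rightarrow> real \<Rightarrow> real" where "fk k t = 1 + (\<Sum>n<k. \<theta> n (D t))"

lemma \<theta>_nonneg: "0 \<le> \<theta> n s" by (simp add: \<theta>_def T_nonneg)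
lemma \<theta>_le1: "0 \<le> s \<Longrightarrow> \<theta> n s \<le> 1"
  unfolding \<theta>_def using r_props(1)[of n] by (intro T_le1) (simp add: divide_nonneg_pos)
lemma \<theta>_zero: "r n \<le> s \<Longrightarrow> \<theta> n s = 0"
  unfolding \<theta>_def using r_props(1)[of n] by (intro T_zero) (simp add: field_simps)
lemma \<theta>_ge: "s \<le> r n / 2 \<Longrightarrow> \<theta> n s \<ge> 1/4"
  unfolding \<theta>_def using r_props(1)[of n] by (intro T_ge) (simp add: field_simps)

lemma \<theta>_deriv: "(\<theta> n has_real_derivative (2 * max (1 - s / r n) 0 * (- 1 / r n))) (at s)"
proof -
  have "((\<lambda>s. 1 - s / r n) has_real_derivative (- 1 / r n)) (at s)"
    using r_props(1)[of n] by (auto intro!: derivative_eq_intros)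
  from DERIV_chain2[OF T_deriv this] show ?thesis unfolding \<theta>_def by simp
qed

lemma \<theta>_cont: "continuous_on UNIV (\<theta> n)"
  using \<theta>_deriv by (meson DERIV_continuous continuous_at_imp_continuous_on)

lemma W_eq:
  assumes s: "0 < s" and M: "nat \<lceil>1/s\<rceil> \<le> M"
  shows "Wf s = (\<Sum>k<M. \<theta> k s)"
  unfolding Wf_def
proof (rule sum.mono_neutral_left)
  show "\<forall>i\<in>{..<M} - {..<nat \<lceil>1/s\<rceil>}. \<theta> i s = 0"
  proof
    fix k assume "k \<in> {..<M} - {..<nat \<lceil>1/s\<rceil>}"
    hence k: "nat \<lceil>1/s\<rceil> \<le> k" by auto
    hence "1/s \<le> real k" by linarith
    have kpos: "real k > 0" using \<open>1/s \<le> real k\<close> s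
      by (metis divide_pos_pos order_less_le_trans zero_less_one)
    have "1 \<le> s * real k" using \<open>1/s \<le> real k\<close> s by (simp add: divide_le_eq mult.commute)
    hence "1 / real k \<le> s" using kpos by (simp add: divide_le_eq mult.commute)
    moreover have "1 / real (Suc k) \<le> 1 / real k" using kpos
      by (intro divide_left_mono) auto
    ultimately have "r k \<le> s" using r_props(2)[of k] by linarith
    thus "\<theta> k s = 0" by (rule \<theta>_zero)
  qed
qed (use M in auto)

lemma W_nonneg: "0 \<le> Wf s" unfolding Wf_def by (intro sum_nonneg \<theta>_nonneg)

lemma W_deriv: assumes "0 < s" shows "\<exists>W'. (Wf has_real_derivative W') (at s)"
proof -
  let ?M = "nat \<lceil>2/s\<rceil>"
  have "((\<lambda>x. \<Sum>k<?M. \<theta> k x) has_real_derivative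
        (\<Sum>k<?M. 2 * max (1 - s / r k) 0 * (- 1 / r k))) (at s)"
    by (rule DERIV_sum) (rule \<theta>_deriv)
  hence "(Wf has_real_derivative (\<Sum>k<?M. 2 * max (1 - s / r k) 0 * (- 1 / r k))) (at s)"
  proof (rule has_field_derivative_transform_within_open[where S="{s/2<..}"])
    fix x assume x: "x \<in> {s/2<..}"
    hence "1/x \<le> 2/s" using assms by (auto simp: field_simps)
    hence "nat \<lceil>1/x\<rceil> \<le> ?M" by (intro nat_mono ceiling_mono)
    thus "(\<Sum>k<?M. \<theta> k x) = Wf x" using W_eq[of x ?M] x assms by auto
  qed (use assms in auto)
  thus ?thesis by blast
qed

definition \<rho> :: "nat \<Rightarrow> real" where "\<rho> N = Min (r ` {..N}) / 2"

lemma \<rho>_pos: "0 < \<rho> N"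
proof -
  have "Min (r ` {..N}) \<in> r ` {..N}" by (intro Min_in) auto
  thus ?thesis unfolding \<rho>_def using r_props(1) by auto
qed

lemma W_lower:
  assumes s: "0 < s" "s \<le> \<rho> N"
  shows "real (Suc N) / 4 \<le> Wf s"
proof -
  let ?M = "max (nat \<lceil>1/s\<rceil>) (Suc N)"
  have "Wf s = (\<Sum>k<?M. \<theta> k s)" using W_eq[of s ?M] s by auto
  moreover have "(\<Sum>k<Suc N. \<theta> k s) \<le> (\<Sum>k<?M. \<theta> k s)"
    by (rule sum_mono2) (auto simp: \<theta>_nonneg)
  moreover have "(\<Sum>k<Suc N. (1/4::real)) \<le> (\<Sum>k<Suc N. \<theta> k s)"
  proof (rule sum_mono)
    fix k assume "k \<in> {..<Suc N}"
    hence "Min (r ` {..N}) \<le> r k" by (intro Min_le) auto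
    hence "s \<le> r k / 2" using s(2) unfolding \<rho>_def by linarith
    thus "1/4 \<le> \<theta> k s" by (rule \<theta>_ge)
  qed
  ultimately show ?thesis by simp
qed

lemma w_ge1: "1 \<le> w t" unfolding w_def using W_nonneg by simp

lemma w_lower:
  assumes t: "t \<in> {\<alpha>..\<beta>}" "t \<notin> F" and "D t \<le> \<rho> N"
  shows "1 + real (Suc N) / 4 \<le> w t"
  unfolding w_def using W_lower[of "D t" N] notF_gap(3)[OF t] assms(3) by simp

lemma fk_cont: "continuous_on {\<alpha>..\<beta>} (fk k)"
proof -
  have "continuous_on {\<alpha>..\<beta>} (\<lambda>t. \<theta> n (D t))" for n
    using continuous_on_compose2[OF \<theta>_cont D_cont] by auto
  thus ?thesis unfolding fk_def by (intro continuous_intros) auto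
qed

lemma fk_eq: assumes t: "t \<in> {\<alpha>..\<beta>}" "t \<notin> F" and "nat \<lceil>1 / D t\<rceil> \<le> k"
  shows "fk k t = w t"
  unfolding fk_def w_def using W_eq[of "D t" k] notF_gap(3)[OF t] assms(3) by simp

lemma fk_le: "t \<in> {\<alpha>..\<beta>} \<Longrightarrow> fk k t \<le> 1 + k"
proof -
  assume t: "t \<in> {\<alpha>..\<beta>}"
  have "(\<Sum>n<k. \<theta> n (D t)) \<le> (\<Sum>n<k. 1)" by (intro sum_mono \<theta>_le1 D_nonneg[OF t])
  thus ?thesis unfolding fk_def by simp
qed

lemma fk_w: "t \<in> {\<alpha>..\<beta>} \<Longrightarrow> t \<notin> F \<Longrightarrow> fk k t \<le> w t"
proof -
  assume t: "t \<in> {\<alpha>..\<beta>}" "t \<notin> F"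
  let ?M = "max k (nat \<lceil>1 / D t\<rceil>)"
  have "fk k t \<le> fk ?M t" unfolding fk_def by (auto intro!: sum_mono2 \<theta>_nonneg)
  also have "\<dots> = w t" by (rule fk_eq[OF t]) auto
  finally show ?thesis .
qed

lemma int_theta: "integral {\<alpha>..\<beta>} (\<lambda>t. \<theta> n (D t)) \<le> (1/2)^n"
proof -
  let ?A = "A (r n)"
  have sub: "?A \<inter> {\<alpha>..\<beta>} = ?A" unfolding A_def by auto
  have int1: "(\<lambda>t. if t \<in> ?A then 1 else 0::real) integrable_on {\<alpha>..\<beta>}"
    using A_lmeas[of "r n"] unfolding integrable_restrict_Int lmeasurable_iff_integrable_on sub .
  have eq: "integral {\<alpha>..\<beta>} (\<lambda>t. if t \<in> ?A then 1 else 0::real) = measure lebesgue ?A"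
    unfolding integral_restrict_Int lmeasure_integral[OF A_lmeas] sub ..
  have "integral {\<alpha>..\<beta>} (\<lambda>t. \<theta> n (D t)) \<le> integral {\<alpha>..\<beta>} (\<lambda>t. if t \<in> ?A then 1 else 0::real)"
  proof (rule integral_le)
    show "(\<lambda>t. \<theta> n (D t)) integrable_on {\<alpha>..\<beta>}"
      using continuous_on_compose2[OF \<theta>_cont D_cont] by (intro integrable_continuous_interval) auto
    fix x assume x: "x \<in> {\<alpha>..\<beta>}"
    show "\<theta> n (D x) \<le> (if x \<in> ?A then 1 else 0)"
    proof (cases "x \<in> ?A")
      case True thus ?thesis using \<theta>_le1[OF D_nonneg[OF x]] by simp
    next
      case False
      hence "r n \<le> D x" using x unfolding A_def by auto
      thus ?thesis using \<theta>_zero False by simp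
    qed
  qed (fact int1)
  thus ?thesis using eq r_props(3)[of n] by linarith
qed

definition S :: "real set" where "S = {\<alpha>..\<beta>} - F"

lemma negl_S: "negligible {x \<in> S - {\<alpha>..\<beta>}. f x \<noteq> 0}" "negligible {x \<in> {\<alpha>..\<beta>} - S. f x \<noteq> 0}"
  unfolding S_def by (auto intro: negligible_subset[OF nF])

lemma int_S: fixes f :: "real \<Rightarrow> real" assumes "f integrable_on {\<alpha>..\<beta>}" shows "f integrable_on S"
  using negl_S[of f] by (intro integrable_spike_set[OF assms]) auto
lemma int_S': fixes f :: "real \<Rightarrow> real" assumes "f integrable_on S" shows "f integrable_on {\<alpha>..\<beta>}"
  using negl_S[of f] by (intro integrable_spike_set[OF assms]) auto
lemma integral_S: fixes f :: "real \<Rightarrow> real" shows "integral S f = integral {\<alpha>..\<beta>} f"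
  using negl_S[of f] by (intro integral_spike_set) auto

lemma fk_int: "fk k integrable_on {\<alpha>..\<beta>}"
  using fk_cont by (rule integrable_continuous_interval)

lemma int_fk: "integral {\<alpha>..\<beta>} (fk k) = (\<beta> - \<alpha>) + (\<Sum>n<k. integral {\<alpha>..\<beta>} (\<lambda>t. \<theta> n (D t)))"
proof -
  have i: "(\<lambda>t. \<theta> n (D t)) integrable_on {\<alpha>..\<beta>}" for n
    using continuous_on_compose2[OF \<theta>_cont D_cont] by (intro integrable_continuous_interval) auto
  have "integral {\<alpha>..\<beta>} (fk k) = integral {\<alpha>..\<beta>} (\<lambda>t. 1) + integral {\<alpha>..\<beta>} (\<lambda>t. \<Sum>n<k. \<theta> n (D t))"
    unfolding fk_def by (rule integral_add) (auto intro: i integrable_sum)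
  also have "integral {\<alpha>..\<beta>} (\<lambda>t. \<Sum>n<k. \<theta> n (D t)) = (\<Sum>n<k. integral {\<alpha>..\<beta>} (\<lambda>t. \<theta> n (D t)))"
    by (rule integral_sum) (auto intro: i)
  finally show ?thesis using ab by simp
qed

lemma int_fk_bound: "integral {\<alpha>..\<beta>} (fk k) \<le> (\<beta> - \<alpha>) + 2"
proof -
  have "(\<Sum>n<k. integral {\<alpha>..\<beta>} (\<lambda>t. \<theta> n (D t))) \<le> (\<Sum>n<k. (1/2)^n)"
    by (intro sum_mono int_theta)
  also have "\<dots> \<le> 2" unfolding geo_sum by simp
  finally show ?thesis unfolding int_fk by simp
qed

lemma int_fk_nonneg: "0 \<le> integral {\<alpha>..\<beta>} (fk k)"
proof -
  have "0 \<le> integral {\<alpha>..\<beta>} (\<lambda>t. \<theta> n (D t))" for n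
    using continuous_on_compose2[OF \<theta>_cont D_cont]
    by (intro integral_nonneg integrable_continuous_interval) (auto simp: \<theta>_nonneg)
  thus ?thesis unfolding int_fk using ab by (simp add: sum_nonneg)
qed

lemma MCT: "w integrable_on S \<and> ((\<lambda>k. integral S (fk k)) \<longlonglongrightarrow> integral S w)"
proof (rule monotone_convergence_increasing)
  show "fk k integrable_on S" for k using fk_int by (rule int_S)
  show "fk k x \<le> fk (Suc k) x" for k x unfolding fk_def by (simp add: \<theta>_nonneg)
  show "(\<lambda>k. fk k x) \<longlonglongrightarrow> w x" if x: "x \<in> S" for x
  proof -
    have ev: "\<forall>\<^sub>F k in sequentially. w x = fk k x"
      using fk_eq x unfolding S_def eventually_sequentially by (metis Diff_iff)
    show ?thesis by (rule Lim_transform_eventually[OF tendsto_const ev])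
  qed
  show "bounded (range (\<lambda>k. integral S (fk k)))"
    unfolding bounded_real integral_S
  proof (intro exI[of _ "(\<beta> - \<alpha>) + 2"] ballI)
    fix x assume "x \<in> range (\<lambda>k. integral {\<alpha>..\<beta>} (fk k))"
    then obtain k where x: "x = integral {\<alpha>..\<beta>} (fk k)" by blast
    show "\<bar>x\<bar> \<le> (\<beta> - \<alpha>) + 2" using int_fk_bound[of k] int_fk_nonneg[of k] unfolding x by linarith
  qed
qed

lemma w_int: "w integrable_on {\<alpha>..\<beta>}" using MCT int_S' by blast

lemma w_tail: "integral {\<alpha>..\<beta>} w - integral {\<alpha>..\<beta>} (fk K) \<le> 2 * (1/2)^K"
proof -
  let ?I = "\<lambda>n. integral {\<alpha>..\<beta>} (\<lambda>t. \<theta> n (D t))"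
  let ?Q = "\<lambda>k. (\<Sum>n<k. ?I n) - (\<Sum>n<k. (1/2::real)^n)"
  have "decseq ?Q" by (rule decseq_SucI) (simp add: int_theta)
  hence Q: "k \<ge> K \<Longrightarrow> ?Q k \<le> ?Q K" for k by (simp add: decseq_def)
  have "integral {\<alpha>..\<beta>} (fk k) \<le> integral {\<alpha>..\<beta>} (fk K) + 2 * (1/2)^K" if k: "k \<ge> K" for k
  proof -
    have "0 \<le> (1/2::real)^k" by simp
    thus ?thesis using Q[OF k] unfolding int_fk geo_sum by linarith
  qed
  hence "integral S w \<le> integral {\<alpha>..\<beta>} (fk K) + 2 * (1/2)^K"
    using MCT unfolding integral_S by (intro LIMSEQ_le_const2[of "\<lambda>k. integral {\<alpha>..\<beta>} (fk k)"]) auto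
  thus ?thesis unfolding integral_S by simp
qed

end

context L begin

definition Iw :: real where "Iw = integral {\<alpha>..\<beta>} w"
definition c :: real where "c = (\<beta> - \<alpha>) / Iw"
definition g :: "real \<Rightarrow> real" where "g y = \<alpha> + c * integral {\<alpha>..y} w"

lemma int_lower:
  assumes uv: "\<alpha> \<le> u" "u \<le> v" "v \<le> \<beta>" and m: "\<And>s. s \<in> {u..v} \<Longrightarrow> s \<notin> F \<Longrightarrow> m \<le> w s"
  shows "m * (v - u) \<le> integral {u..v} w"
proof -
  let ?w2 = "\<lambda>s. if s \<in> F then m else w s"
  have wi: "w integrable_on {u..v}" by (rule integrable_on_subinterval[OF w_int]) (use uv in auto)
  have sp: "\<And>x. x \<in> {u..v} - F \<Longrightarrow> w x = ?w2 x" by simp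
  have eq: "integral {u..v} w = integral {u..v} ?w2"
    by (rule integral_spike[OF nF]) simp
  have wi2: "?w2 integrable_on {u..v}"
    by (rule integrable_spike[OF wi nF]) simp
  have "integral {u..v} (\<lambda>s. m) \<le> integral {u..v} ?w2"
    by (rule integral_le[OF _ wi2]) (use m in auto)
  thus ?thesis using eq uv by (simp add: mult.commute)
qed

lemma Iw_ge: "\<beta> - \<alpha> \<le> Iw"
  using int_lower[of \<alpha> \<beta> 1] ab w_ge1 unfolding Iw_def by auto

lemma Iw_pos: "0 < Iw" using Iw_ge ab by linarith
lemma c_pos: "0 < c" unfolding c_def using Iw_pos ab by simp

lemma g_diff:
  assumes "\<alpha> \<le> u" "u \<le> v" "v \<le> \<beta>"
  shows "g v - g u = c * integral {u..v} w"
proof -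
  have wi: "w integrable_on {\<alpha>..v}" by (rule integrable_on_subinterval[OF w_int]) (use assms in auto)
  have "integral {\<alpha>..u} w + integral {u..v} w = integral {\<alpha>..v} w"
    using Henstock_Kurzweil_Integration.integral_combine[OF assms(1,2) wi] .
  thus ?thesis unfolding g_def by (simp add: algebra_simps flip: \<open>_ = integral {\<alpha>..v} w\<close>)
qed

lemma g_lower:
  assumes "\<alpha> \<le> u" "u \<le> v" "v \<le> \<beta>"
  shows "c * (v - u) \<le> g v - g u"
proof -
  have "1 * (v - u) \<le> integral {u..v} w" by (rule int_lower[OF assms]) (rule w_ge1)
  thus ?thesis unfolding g_diff[OF assms] using c_pos by simp
qed

lemma g_strict: "strict_mono_on {\<alpha>..\<beta>} g"
proof (rule strict_mono_onI)
  fix u v assume "u \<in> {\<alpha>..\<beta>}" "v \<in> {\<alpha>..\<beta>}" "u < v"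
  moreover have "0 < c * (v - u)" using c_pos \<open>u < v\<close> by simp
  ultimately show "g u < g v" using g_lower[of u v] by auto
qed

lemma g_cont: "continuous_on {\<alpha>..\<beta>} g"
  unfolding g_def by (intro continuous_intros indefinite_integral_continuous_1 w_int)

lemma g_a: "g \<alpha> = \<alpha>" unfolding g_def by simp
lemma g_b: "g \<beta> = \<beta>" unfolding g_def c_def Iw_def[symmetric] using Iw_pos by simp

lemma g_image: "g ` {\<alpha>..\<beta>} = {\<alpha>..\<beta>}"
proof
  show "g ` {\<alpha>..\<beta>} \<subseteq> {\<alpha>..\<beta>}"
  proof
    fix y assume "y \<in> g ` {\<alpha>..\<beta>}"
    then obtain x where x: "x \<in> {\<alpha>..\<beta>}" "y = g x" by blast
    have "0 \<le> c * (x - \<alpha>)" "0 \<le> c * (\<beta> - x)" using x c_pos by auto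
    hence "g \<alpha> \<le> g x" "g x \<le> g \<beta>" using g_lower[of \<alpha> x] g_lower[of x \<beta>] x by auto
    thus "y \<in> {\<alpha>..\<beta>}" using x g_a g_b by simp
  qed
  show "{\<alpha>..\<beta>} \<subseteq> g ` {\<alpha>..\<beta>}"
  proof
    fix y assume y: "y \<in> {\<alpha>..\<beta>}"
    obtain x where "\<alpha> \<le> x" "x \<le> \<beta>" "g x = y"
      using IVT'[of g \<alpha> y \<beta>] y g_a g_b g_cont ab by auto
    thus "y \<in> g ` {\<alpha>..\<beta>}" by force
  qed
qed

lemma g_homeo: "\<exists>h. homeomorphism {\<alpha>..\<beta>} {\<alpha>..\<beta>} g h"
  using g_cont g_image strict_mono_on_imp_inj_on[OF g_strict]
  by (intro homeomorphism_compact) auto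

definition h :: "real \<Rightarrow> real" where "h = (SOME h. homeomorphism {\<alpha>..\<beta>} {\<alpha>..\<beta>} g h)"

lemma h_homeo: "homeomorphism {\<alpha>..\<beta>} {\<alpha>..\<beta>} g h"
  unfolding h_def using someI_ex[OF g_homeo] .

lemma h_props:
  "\<And>x. x \<in> {\<alpha>..\<beta>} \<Longrightarrow> h x \<in> {\<alpha>..\<beta>}"
  "\<And>x. x \<in> {\<alpha>..\<beta>} \<Longrightarrow> g (h x) = x"
  "\<And>y. y \<in> {\<alpha>..\<beta>} \<Longrightarrow> h (g y) = y"
  "continuous_on {\<alpha>..\<beta>} h"
  using h_homeo unfolding homeomorphism_def by auto

lemma h_strict: "strict_mono_on {\<alpha>..\<beta>} h"
proof (rule strict_mono_onI)
  fix x1 x2 assume x: "x1 \<in> {\<alpha>..\<beta>}" "x2 \<in> {\<alpha>..\<beta>}" "x1 < x2"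
  show "h x1 < h x2"
  proof (rule ccontr)
    assume "\<not> h x1 < h x2"
    hence "h x2 \<le> h x1" by simp
    hence "g (h x2) \<le> g (h x1)"
      using strict_mono_on_leD[OF g_strict] h_props(1) x by blast
    thus False using h_props(2) x by simp
  qed
qed

end

context L begin

lemma w_fun: "w = (\<lambda>t. 1 + Wf (D t))" unfolding w_def by (rule ext) simp

lemma w_deriv:
  assumes y: "y \<in> {\<alpha>..\<beta>}" "y \<notin> F"
  shows "\<exists>w'. (w has_real_derivative w') (at y)"
proof -
  obtain W' where W': "(Wf has_real_derivative W') (at (D y))" using W_deriv[OF notF_gap(3)[OF y]] by blast
  have "((\<lambda>t. 1 + Wf (D t)) has_real_derivative 0 + W' * D' y) (at y)"
    by (intro DERIV_add DERIV_const DERIV_chain2[OF W' D_deriv[OF y]])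
  thus ?thesis unfolding w_fun by blast
qed

lemma w_isCont: "y \<in> {\<alpha>..\<beta>} \<Longrightarrow> y \<notin> F \<Longrightarrow> isCont w y"
  using w_deriv DERIV_isCont by blast

lemma g_deriv:
  assumes y: "y \<in> {\<alpha>..\<beta>}" "y \<notin> F"
  shows "(g has_real_derivative c * w y) (at y)"
proof -
  have yi: "\<alpha> < y" "y < \<beta>" using notF_gap[OF y] by auto
  have "((\<lambda>u. integral {\<alpha>..u} w) has_vector_derivative w y) (at y within ({\<alpha>..\<beta>} - {}))"
    by (rule integral_has_vector_derivative_continuous_at[OF w_int])
       (use y w_isCont[OF y] in \<open>auto intro: continuous_at_imp_continuous_at_within\<close>)
  hence "((\<lambda>u. integral {\<alpha>..u} w) has_real_derivative w y) (at y)"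
    unfolding has_real_derivative_iff_has_vector_derivative using at_within_Icc_at[OF yi] by simp
  hence "((\<lambda>u. \<alpha> + c * integral {\<alpha>..u} w) has_real_derivative 0 + c * w y) (at y)"
    by (intro DERIV_add DERIV_const DERIV_cmult)
  thus ?thesis unfolding g_def[abs_def] by simp
qed

definition kf :: "real \<Rightarrow> real" where "kf y = (if y \<in> F then 0 else inverse (w y))"

lemma kf_deriv:
  assumes y: "y \<in> {\<alpha>..\<beta>}" "y \<notin> F"
  shows "\<exists>k'. (kf has_real_derivative k') (at y)"
proof -
  obtain w' where w': "(w has_real_derivative w') (at y)" using w_deriv[OF y] by blast
  have "w y \<noteq> 0" using w_ge1[of y] by linarith
  from DERIV_inverse_fun[OF w' this]
  have "((\<lambda>x. inverse (w x)) has_real_derivative - (w' * inverse (w y ^ Suc (Suc 0)))) (at y)" .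
  hence "(kf has_real_derivative - (w' * inverse (w y ^ Suc (Suc 0)))) (at y)"
  proof (rule has_field_derivative_transform_within_open[where S="- F"])
    show "open (- F)" using cF by auto
  qed (use y in \<open>auto simp: kf_def\<close>)
  thus ?thesis by blast
qed

lemma kf_small:
  assumes "y' \<in> {\<alpha>..\<beta>}" "f \<in> F" "\<bar>y' - f\<bar> \<le> \<rho> N"
  shows "0 \<le> kf y' \<and> kf y' \<le> 1 / (1 + real (Suc N) / 4)"
proof (cases "y' \<in> F")
  case True thus ?thesis by (simp add: kf_def)
next
  case False
  have "D y' \<le> \<rho> N" using D_le_dist[OF assms(1,2)] assms(3) by linarith
  hence "1 + real (Suc N) / 4 \<le> w y'" using w_lower[OF assms(1) False] by blast
  moreover have "0 < 1 + real (Suc N) / 4" using of_nat_0_le_iff[of "Suc N"] by linarith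
  ultimately have "inverse (w y') \<le> inverse (1 + real (Suc N) / 4)"
    by (rule le_imp_inverse_le)
  moreover have "0 \<le> inverse (w y')" using w_ge1[of y'] by simp
  ultimately show ?thesis using False by (simp add: kf_def inverse_eq_divide)
qed

lemma kf_cont: "continuous_on {\<alpha>..\<beta>} kf"
  unfolding continuous_on_eq_continuous_within
proof (intro ballI)
  fix y assume y: "y \<in> {\<alpha>..\<beta>}"
  show "continuous (at y within {\<alpha>..\<beta>}) kf"
  proof (cases "y \<in> F")
    case False
    obtain k' where "(kf has_real_derivative k') (at y)" using kf_deriv[OF y False] by blast
    hence "isCont kf y" by (rule DERIV_isCont)
    thus ?thesis by (rule continuous_at_imp_continuous_at_within)
  next
    case True
    show ?thesis unfolding continuous_within_eps_delta
    proof (intro allI impI)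
      fix e :: real assume e: "0 < e"
      obtain N where N: "4 / e < real N" using reals_Archimedean2 by blast
      have "1 / (1 + real (Suc N) / 4) < e"
      proof -
        have "4 < e * real N" using N e by (simp add: divide_less_eq mult.commute)
        moreover have "e * (1 + real (Suc N) / 4) = e + e / 4 + (e * real N) / 4"
          by (simp add: algebra_simps add_divide_distrib)
        ultimately have "1 < e * (1 + real (Suc N) / 4)" using e by linarith
        moreover have "0 < 1 + real (Suc N) / 4" using of_nat_0_le_iff[of "Suc N"] by linarith
        ultimately show ?thesis by (simp add: divide_less_eq mult.commute)
      qed
      show "\<exists>d>0. \<forall>x'\<in>{\<alpha>..\<beta>}. dist x' y < d \<longrightarrow> dist (kf x') (kf y) < e"
      proof (intro exI[of _ "\<rho> N"] conjI ballI impI)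
        fix x' assume x': "x' \<in> {\<alpha>..\<beta>}" "dist x' y < \<rho> N"
        have "0 \<le> kf x' \<and> kf x' \<le> 1 / (1 + real (Suc N) / 4)"
          by (rule kf_small[OF x'(1) True]) (use x'(2) in \<open>simp add: dist_real_def\<close>)
        thus "dist (kf x') (kf y) < e" using True \<open>1 / (1 + real (Suc N) / 4) < e\<close>
          by (simp add: kf_def dist_real_def)
      qed (rule \<rho>_pos)
    qed
  qed
qed

lemma h_interior:
  assumes x: "x \<in> {\<alpha>..\<beta>}" and hx: "h x \<notin> F"
  shows "\<alpha> < x" "x < \<beta>"
proof -
  have y: "h x \<in> {\<alpha>..\<beta>}" using h_props(1)[OF x] .
  have "\<alpha> < h x" "h x < \<beta>" using notF_gap[OF y hx] by auto
  hence "g \<alpha> < g (h x)" "g (h x) < g \<beta>"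
    using strict_mono_onD[OF g_strict] y ab by auto
  thus "\<alpha> < x" "x < \<beta>" using g_a g_b h_props(2)[OF x] by auto
qed

lemma h_deriv_notF:
  assumes x: "x \<in> {\<alpha>..\<beta>}" and hx: "h x \<notin> F"
  shows "(h has_real_derivative kf (h x) / c) (at x)"
proof -
  have y: "h x \<in> {\<alpha>..\<beta>}" using h_props(1)[OF x] .
  have "w (h x) \<noteq> 0" using w_ge1[of "h x"] by linarith
  hence ne: "c * w (h x) \<noteq> 0" using c_pos by simp
  have ic: "isCont h x"
    by (rule continuous_on_interior[OF h_props(4)]) (use h_interior[OF x hx] in simp)
  have "(h has_real_derivative inverse (c * w (h x))) (at x)"
    by (rule DERIV_inverse_function[OF g_deriv[OF y hx] ne h_interior[OF x hx] _ ic])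
       (auto intro: h_props(2))
  moreover have "inverse (c * w (h x)) = kf (h x) / c"
    using hx by (simp add: kf_def inverse_eq_divide)
  ultimately show ?thesis by simp
qed

lemma g_near_F:
  assumes y: "y \<in> F" and y': "y' \<in> {\<alpha>..\<beta>}" and d: "\<bar>y' - y\<bar> \<le> \<rho> N"
  shows "c * \<bar>y' - y\<bar> * (1 + real (Suc N) / 4) \<le> \<bar>g y' - g y\<bar>"
proof -
  have yy: "y \<in> {\<alpha>..\<beta>}" using F_sub[OF y] .
  let ?m = "1 + real (Suc N) / 4"
  have low: "?m \<le> w s" if "s \<in> {min y y'..max y y'}" "s \<notin> F" for s
  proof -
    have s: "s \<in> {\<alpha>..\<beta>}" using that yy y' by auto
    have "D s \<le> \<bar>s - y\<bar>" by (rule D_le_dist[OF s y])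
    also have "\<dots> \<le> \<bar>y' - y\<bar>" using that by auto
    finally have "D s \<le> \<rho> N" using d by linarith
    thus ?thesis by (rule w_lower[OF s that(2)])
  qed
  show ?thesis
  proof (cases "y \<le> y'")
    case True
    have "?m * (y' - y) \<le> integral {y..y'} w"
      by (rule int_lower) (use True yy y' low in auto)
    moreover have "g y' - g y = c * integral {y..y'} w" by (rule g_diff) (use True yy y' in auto)
    ultimately have "c * (?m * (y' - y)) \<le> g y' - g y"
      using c_pos by (auto intro: mult_left_mono)
    moreover have "c * \<bar>y' - y\<bar> * ?m = c * (?m * (y' - y))" using True by simp
    ultimately show ?thesis using abs_ge_self[of "g y' - g y"] by linarith
  next
    case False
    have "?m * (y - y') \<le> integral {y'..y} w"
      by (rule int_lower) (use False yy y' low in auto)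
    moreover have "g y - g y' = c * integral {y'..y} w" by (rule g_diff) (use False yy y' in auto)
    ultimately have "c * (?m * (y - y')) \<le> g y - g y'"
      using c_pos by (auto intro: mult_left_mono)
    moreover have "c * \<bar>y' - y\<bar> * ?m = c * (?m * (y - y'))" using False by simp
    ultimately show ?thesis using abs_ge_minus_self[of "g y' - g y"] by linarith
  qed
qed

end

context L begin

lemma h_deriv_F:
  assumes x: "x \<in> {\<alpha>..\<beta>}" and hx: "h x \<in> F"
  shows "(h has_real_derivative 0) (at x within {\<alpha>..\<beta>})"
  unfolding has_field_derivative_def has_derivative_within_alt
proof (intro conjI allI impI)
  show "bounded_linear ((*) (0::real))" by (rule bounded_linear_mult_right)
  fix e :: real assume e: "0 < e"
  obtain N where N: "4 / (c * e) < real N" using reals_Archimedean2 by blast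
  have ce: "0 < c * e" using c_pos e by simp
  have "4 < c * e * real N" using N ce by (simp add: divide_less_eq mult.commute)
  moreover have "e * (c * (1 + real (Suc N) / 4)) = c * e + c * e / 4 + (c * e * real N) / 4"
    by (simp add: algebra_simps add_divide_distrib)
  ultimately have key: "1 \<le> e * (c * (1 + real (Suc N) / 4))" using ce by linarith
  have "\<exists>d>0. \<forall>x'\<in>{\<alpha>..\<beta>}. dist x' x < d \<longrightarrow> dist (h x') (h x) < \<rho> N"
    using h_props(4) x \<rho>_pos[of N] unfolding continuous_on_iff by blast
  then obtain d where d: "d > 0" "\<And>x'. x' \<in> {\<alpha>..\<beta>} \<Longrightarrow> dist x' x < d \<Longrightarrow> dist (h x') (h x) < \<rho> N"
    by blast
  show "\<exists>d>0. \<forall>y\<in>{\<alpha>..\<beta>}. norm (y - x) < d \<longrightarrow> norm (h y - h x - 0 * (y - x)) \<le> e * norm (y - x)"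
  proof (intro exI[of _ d] conjI ballI impI)
    fix x' assume x': "x' \<in> {\<alpha>..\<beta>}" "norm (x' - x) < d"
    have "dist (h x') (h x) < \<rho> N" using d(2)[OF x'(1)] x'(2) by (simp add: dist_norm)
    hence hd: "\<bar>h x' - h x\<bar> \<le> \<rho> N" by (simp add: dist_real_def)
    have "c * \<bar>h x' - h x\<bar> * (1 + real (Suc N) / 4) \<le> \<bar>g (h x') - g (h x)\<bar>"
      by (rule g_near_F[OF hx h_props(1)[OF x'(1)] hd])
    hence A: "c * \<bar>h x' - h x\<bar> * (1 + real (Suc N) / 4) \<le> \<bar>x' - x\<bar>"
      using h_props(2)[OF x] h_props(2)[OF x'(1)] by simp
    have "\<bar>h x' - h x\<bar> * 1 \<le> \<bar>h x' - h x\<bar> * (e * (c * (1 + real (Suc N) / 4)))"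
      using key by (intro mult_left_mono) auto
    also have "\<dots> = e * (c * \<bar>h x' - h x\<bar> * (1 + real (Suc N) / 4))" by (simp add: algebra_simps)
    also have "\<dots> \<le> e * \<bar>x' - x\<bar>" using A e by (intro mult_left_mono) auto
    finally show "norm (h x' - h x - 0 * (x' - x)) \<le> e * norm (x' - x)" by simp
  qed (rule d(1))
qed

lemma g_AC: "abs_continuous_on_interval \<alpha> \<beta> g"
  unfolding abs_continuous_on_interval_def
proof (intro allI impI)
  fix \<epsilon> :: real assume \<epsilon>: "0 < \<epsilon>"
  obtain K where K: "(1/2::real)^K < \<epsilon> / (4 * c)"
    using real_arch_pow_inv[of "\<epsilon> / (4 * c)" "1/2"] \<epsilon> c_pos by auto
  define \<delta> where "\<delta> = \<epsilon> / (2 * c * (1 + real K))"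
  have \<delta>pos: "\<delta> > 0" unfolding \<delta>_def using \<epsilon> c_pos by (simp add: add_pos_nonneg)
  define \<phi> where "\<phi> = (\<lambda>t. if t \<in> F then 0 else w t - fk K t)"
  have wf_int: "(\<lambda>t. w t - fk K t) integrable_on {\<alpha>..\<beta>}"
    by (rule integrable_diff[OF w_int fk_int])
  have \<phi>int: "\<phi> integrable_on {\<alpha>..\<beta>}"
    unfolding \<phi>_def by (rule integrable_spike[OF wf_int nF]) simp
  have \<phi>nn: "\<And>t. t \<in> {\<alpha>..\<beta>} \<Longrightarrow> 0 \<le> \<phi> t" unfolding \<phi>_def using fk_w by auto
  have "integral {\<alpha>..\<beta>} \<phi> = integral {\<alpha>..\<beta>} (\<lambda>t. w t - fk K t)"
    unfolding \<phi>_def by (rule integral_spike[OF nF]) simp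
  also have "\<dots> = integral {\<alpha>..\<beta>} w - integral {\<alpha>..\<beta>} (fk K)"
    by (rule integral_diff[OF w_int fk_int])
  finally have \<phi>tot: "integral {\<alpha>..\<beta>} \<phi> \<le> 2 * (1/2)^K" using w_tail[of K] by linarith
  have split: "\<bar>g v - g u\<bar> \<le> c * (1 + real K) * (v - u) + c * integral {u..v} \<phi>"
    if uv: "\<alpha> \<le> u" "u \<le> v" "v \<le> \<beta>" for u v
  proof -
    have sub: "{u..v} \<subseteq> {\<alpha>..\<beta>}" using uv by auto
    have wi: "w integrable_on {u..v}" by (rule integrable_on_subinterval[OF w_int sub])
    have fi: "fk K integrable_on {u..v}" by (rule integrable_on_subinterval[OF fk_int sub])
    have pi: "\<phi> integrable_on {u..v}" by (rule integrable_on_subinterval[OF \<phi>int sub])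
    have "integral {u..v} w = integral {u..v} (\<lambda>t. fk K t + \<phi> t)"
      unfolding \<phi>_def by (rule integral_spike[OF nF]) simp
    also have "\<dots> = integral {u..v} (fk K) + integral {u..v} \<phi>"
      by (rule integral_add[OF fi pi])
    finally have eq: "integral {u..v} w = integral {u..v} (fk K) + integral {u..v} \<phi>" .
    have "integral {u..v} (fk K) \<le> integral {u..v} (\<lambda>t. 1 + real K)"
      by (rule integral_le[OF fi]) (use fk_le sub in auto)
    also have "\<dots> = (1 + real K) * (v - u)" using uv by simp
    finally have fb: "integral {u..v} (fk K) \<le> (1 + real K) * (v - u)" .
    have gd: "g v - g u = c * integral {u..v} w" by (rule g_diff[OF uv])
    have "0 \<le> g v - g u" using g_lower[OF uv] c_pos uv by (smt (verit) mult_nonneg_nonneg)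
    hence "\<bar>g v - g u\<bar> = c * (integral {u..v} (fk K) + integral {u..v} \<phi>)" using gd eq by simp
    also have "\<dots> \<le> c * ((1 + real K) * (v - u) + integral {u..v} \<phi>)"
      using fb c_pos by (intro mult_left_mono) auto
    finally show ?thesis by (simp add: algebra_simps)
  qed
  show "\<exists>\<delta>>0. \<forall>(n::nat) (u::nat \<Rightarrow> real) (v::nat \<Rightarrow> real). (\<forall>i<n. \<alpha> \<le> u i \<and> u i \<le> v i \<and> v i \<le> \<beta>) \<and>
          (\<forall>i<n. \<forall>j<n. i \<noteq> j \<longrightarrow> v i \<le> u j \<or> v j \<le> u i) \<and> (\<Sum>i<n. v i - u i) < \<delta> \<longrightarrow>
          (\<Sum>i<n. \<bar>g (v i) - g (u i)\<bar>) < \<epsilon>"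
  proof (rule exI[of _ \<delta>], rule conjI[OF \<delta>pos], intro allI impI, goal_cases)
    case (1 n u v)
    note H = 1
    have I: "\<And>i. i < n \<Longrightarrow> \<alpha> \<le> u i \<and> u i \<le> v i \<and> v i \<le> \<beta>" using H by blast
    have disj: "\<And>i j. i < n \<Longrightarrow> j < n \<Longrightarrow> i \<noteq> j \<Longrightarrow> v i \<le> u j \<or> v j \<le> u i" using H by blast
    have small: "(\<Sum>i<n. v i - u i) < \<delta>" using H by blast
    have hi: "(\<phi> has_integral integral {u i..v i} \<phi>) {u i..v i}" if "i \<in> {..<n}" for i
      using I[of i] that by (intro integrable_integral integrable_on_subinterval[OF \<phi>int]) auto
    have pw: "pairwise (\<lambda>i j. negligible ({u i..v i} \<inter> {u j..v j})) {..<n}"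
      unfolding pairwise_def
    proof (intro ballI impI)
      fix i j assume ij: "i \<in> {..<n}" "j \<in> {..<n}" "i \<noteq> j"
      hence "v i \<le> u j \<or> v j \<le> u i" using disj by auto
      thus "negligible ({u i..v i} \<inter> {u j..v j})"
      proof
        assume "v i \<le> u j"
        hence "{u i..v i} \<inter> {u j..v j} \<subseteq> {v i}" by auto
        thus ?thesis by (rule negligible_subset[OF negligible_sing])
      next
        assume "v j \<le> u i"
        hence "{u i..v i} \<inter> {u j..v j} \<subseteq> {v j}" by auto
        thus ?thesis by (rule negligible_subset[OF negligible_sing])
      qed
    qed
    have U: "(\<phi> has_integral (\<Sum>i<n. integral {u i..v i} \<phi>)) (\<Union>i\<in>{..<n}. {u i..v i})"
      by (rule has_integral_UN[OF finite_lessThan hi pw])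
    have "(\<Sum>i<n. integral {u i..v i} \<phi>) = integral (\<Union>i\<in>{..<n}. {u i..v i}) \<phi>"
      using U by (simp add: integral_unique)
    also have "\<dots> \<le> integral {\<alpha>..\<beta>} \<phi>"
    proof (rule integral_subset_le)
      show "(\<Union>i\<in>{..<n}. {u i..v i}) \<subseteq> {\<alpha>..\<beta>}" using I by fastforce
      show "\<phi> integrable_on (\<Union>i\<in>{..<n}. {u i..v i})" using U by blast
    qed (use \<phi>int \<phi>nn in auto)
    finally have US: "(\<Sum>i<n. integral {u i..v i} \<phi>) \<le> 2 * (1/2)^K" using \<phi>tot by linarith
    have "(\<Sum>i<n. \<bar>g (v i) - g (u i)\<bar>) \<le>
          (\<Sum>i<n. c * (1 + real K) * (v i - u i) + c * integral {u i..v i} \<phi>)"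
      by (rule sum_mono) (use split I in auto)
    also have "\<dots> = c * (1 + real K) * (\<Sum>i<n. v i - u i) + c * (\<Sum>i<n. integral {u i..v i} \<phi>)"
      by (simp add: sum.distrib sum_distrib_left)
    also have "\<dots> < c * (1 + real K) * \<delta> + c * (2 * (1/2)^K)"
    proof -
      have "c * (1 + real K) * (\<Sum>i<n. v i - u i) < c * (1 + real K) * \<delta>"
        using small c_pos by (intro mult_strict_left_mono) (auto simp: add_pos_nonneg)
      moreover have "c * (\<Sum>i<n. integral {u i..v i} \<phi>) \<le> c * (2 * (1/2)^K)"
        using US c_pos by (intro mult_left_mono) auto
      ultimately show ?thesis by linarith
    qed
    finally have tot: "(\<Sum>i<n. \<bar>g (v i) - g (u i)\<bar>) < c * (1 + real K) * \<delta> + c * (2 * (1/2)^K)" .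
    have e1: "c * (1 + real K) * \<delta> = \<epsilon> / 2"
    proof -
      have den: "2 * c * (1 + real K) \<noteq> 0" using c_pos by (simp add: add_pos_nonneg)
      have "c * (1 + real K) * \<delta> = (2 * c * (1 + real K)) * \<delta> / 2" by simp
      also have "(2 * c * (1 + real K)) * \<delta> = \<epsilon>" unfolding \<delta>_def using den by simp
      finally show ?thesis .
    qed
    have e2: "c * (2 * (1/2)^K) < \<epsilon> / 2"
    proof -
      have "c * (1/2::real)^K < c * (\<epsilon> / (4 * c))" using K c_pos by (intro mult_strict_left_mono) auto
      also have "\<dots> = \<epsilon> / 4" using c_pos by simp
      finally show ?thesis by linarith
    qed
    show ?case using tot e1 e2 by linarith
  qed
qed

end

theorem lemma3p5:
  fixes \<alpha> \<beta> :: real and F :: "real set"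
  assumes "\<alpha> < \<beta>"
    and "closed F" and "F \<subseteq> {\<alpha>..\<beta>}" and "\<alpha> \<in> F" and "\<beta> \<in> F"
    and "F \<in> null_sets lborel"
  shows "\<exists>h h' g.
           homeomorphism {\<alpha>..\<beta>} {\<alpha>..\<beta>} h g \<and>
           strict_mono_on {\<alpha>..\<beta>} h \<and>
           (\<forall>x\<in>{\<alpha>..\<beta>}. (h has_real_derivative h' x) (at x within {\<alpha>..\<beta>})) \<and>
           continuous_on {\<alpha>..\<beta>} h' \<and>
           (\<forall>x\<in>{\<alpha>..\<beta>}. h' x = 0 \<longleftrightarrow> x \<in> {\<alpha>..\<beta>} \<inter> h -` F) \<and>
           (\<forall>x\<in>{\<alpha>..\<beta>} - h -` F. h' differentiable (at x within {\<alpha>..\<beta>})) \<and>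
           abs_continuous_on_interval \<alpha> \<beta> g"
proof -
  have nF: "negligible F" unfolding negligible_iff_null_sets
    using assms(6) by (rule null_sets_completionI)
  interpret L \<alpha> \<beta> F by (rule L.intro[OF assms(1-5) nF])
  have kf0: "kf y = 0 \<longleftrightarrow> y \<in> F" for y
  proof (cases "y \<in> F")
    case False
    have "w y \<noteq> 0" using w_ge1[of y] by linarith
    thus ?thesis using False by (simp add: kf_def)
  qed (simp add: kf_def)
  show ?thesis
  proof (rule exI[of _ h], rule exI[of _ "\<lambda>x. kf (h x) / c"], rule exI[of _ g], intro conjI ballI)
    show "homeomorphism {\<alpha>..\<beta>} {\<alpha>..\<beta>} h g" using h_homeo by (rule homeomorphism_sym[THEN iffD1])
    show "strict_mono_on {\<alpha>..\<beta>} h" by (rule h_strict)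
    show "abs_continuous_on_interval \<alpha> \<beta> g" by (rule g_AC)
    fix x assume x: "x \<in> {\<alpha>..\<beta>}"
    show "(h has_real_derivative kf (h x) / c) (at x within {\<alpha>..\<beta>})"
    proof (cases "h x \<in> F")
      case True
      thus ?thesis using h_deriv_F[OF x True] by (simp add: kf_def)
    next
      case False
      show ?thesis by (rule has_field_derivative_at_within[OF h_deriv_notF[OF x False]])
    qed
    show "(kf (h x) / c = 0) = (x \<in> {\<alpha>..\<beta>} \<inter> h -` F)" using kf0[of "h x"] c_pos x by simp
  next
    have "continuous_on {\<alpha>..\<beta>} (\<lambda>x. kf (h x))"
      by (rule continuous_on_compose2[OF kf_cont h_props(4)]) (use h_props(1) in auto)
    thus "continuous_on {\<alpha>..\<beta>} (\<lambda>x. kf (h x) / c)"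
      by (rule continuous_on_divide[OF _ continuous_on_const]) (use c_pos in simp)
  next
    fix x assume "x \<in> {\<alpha>..\<beta>} - h -` F"
    hence x: "x \<in> {\<alpha>..\<beta>}" and hx: "h x \<notin> F" by auto
    obtain k' where k': "(kf has_real_derivative k') (at (h x))" using kf_deriv[OF h_props(1)[OF x] hx] by blast
    have "((\<lambda>x. kf (h x)) has_real_derivative k' * (kf (h x) / c)) (at x)"
      by (rule DERIV_chain2[OF k' h_deriv_notF[OF x hx]])
    hence "((\<lambda>x. kf (h x) / c) has_real_derivative k' * (kf (h x) / c) / c) (at x within {\<alpha>..\<beta>})"
      by (rule has_field_derivative_at_within[OF DERIV_cdivide])
    thus "(\<lambda>x. kf (h x) / c) differentiable (at x within {\<alpha>..\<beta>})"
      by (rule differentiableI[OF has_field_derivative_imp_has_derivative])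
  qed
qed

end
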